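(* In Smoluchowski's discrete model (defined in the context), for every $t\ge0$ there exists $\nu_t>0$ such that $\mathbb{P}(n^{(N)}_t\le\nu_t)\to0$ as $N\to\infty$.
   Context: Smoluchowski's discrete model: fix $N\ge2$ and $(\alpha(N))$ with $\alpha(N)\to\infty$, $\alpha(N)/N\to0$. Particles are $[N]$; each unordered pair $\{i,j\}$ gets an independent exponential clock with parameter $1/N$; initially no links. When a clock rings the link is created unless one of its ends belongs at that moment to a cluster (connected component of created links) of size $\ge\alpha(N)$, in which case it is never created. Particles in clusters of size $<\alpha(N)$ are in solution; $n^{(N)}_t$ is the number of particles in solution at time $t$ divided by $N$. *)

theory Defs
  imports "HOL-Probability.Probability"
begin

text \<open>Particles are 0,...,N-1; unordered pairs are encoded as (i,j) with i < j < N.\<close>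
definition pairs :: "nat \<Rightarrow> (nat \<times> nat) set" where
  "pairs N = {(i,j). i < j \<and> j < N}"

definition clocks :: "nat \<Rightarrow> ((nat \<times> nat) \<Rightarrow> real) measure" where
  "clocks N = PiM (pairs N) (\<lambda>_. density lborel (exponential_density (1 / real N)))"

definition cluster :: "(nat \<times> nat) set \<Rightarrow> nat \<Rightarrow> nat set" where
  "cluster E i = {j. (i, j) \<in> (E \<union> E\<inverse>)\<^sup>*}"

definition ring :: "real \<Rightarrow> (nat \<times> nat) set \<Rightarrow> nat \<times> nat \<Rightarrow> (nat \<times> nat) set" where
  "ring a E p = (if real (card (cluster E (fst p))) < a \<and> real (card (cluster E (snd p))) < a
                 then insert p E else E)"

text \<open>Links created by time t: process the clocks that rang by time t in
  chronological order (ties, a null event, broken by a fixed enumeration of the pairs, sort_key being stable).\<close>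
definition links :: "nat \<Rightarrow> real \<Rightarrow> real \<Rightarrow> ((nat \<times> nat) \<Rightarrow> real) \<Rightarrow> (nat \<times> nat) set" where
  "links N a t \<omega> = fold (\<lambda>p E. ring a E p)
      (sort_key \<omega> (filter (\<lambda>p. \<omega> p \<le> t) [(i, j). j \<leftarrow> [0..<N], i \<leftarrow> [0..<j]])) {}"

text \<open>Fraction of particles in solution (clusters of size < a) at time t.\<close>
definition sol_frac :: "nat \<Rightarrow> real \<Rightarrow> real \<Rightarrow> ((nat \<times> nat) \<Rightarrow> real) \<Rightarrow> real" where
  "sol_frac N a t \<omega> = real (card {i \<in> {0..<N}. real (card (cluster (links N a t \<omega>) i)) < a}) / real N"

end

theory Submission
  imports Defs
begin


lemma fold_ring_subset: "fold (\<lambda>p E. ring a E p) l E0 \<subseteq> E0 \<union> set l"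
proof (induction l arbitrary: E0)
  case Nil then show ?case by simp
next
  case (Cons x l)
  have "fold (\<lambda>p E. ring a E p) (x # l) E0 = fold (\<lambda>p E. ring a E p) l (ring a E0 x)" by simp
  also have "\<dots> \<subseteq> ring a E0 x \<union> set l" by (rule Cons.IH)
  also have "\<dots> \<subseteq> E0 \<union> set (x # l)" by (auto simp: ring_def)
  finally show ?case .
qed

lemma set_pairs_list: "set [(i, j). j \<leftarrow> [0..<N], i \<leftarrow> [0..<j]] = pairs N"
  by (auto simp: pairs_def)

lemma links_subset: "links N a t \<omega> \<subseteq> {p \<in> pairs N. \<omega> p \<le> t}"
proof -
  let ?l = "sort_key \<omega> (filter (\<lambda>p. \<omega> p \<le> t) [(i, j). j \<leftarrow> [0..<N], i \<leftarrow> [0..<j]])"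
  have "links N a t \<omega> \<subseteq> {} \<union> set ?l" unfolding links_def by (rule fold_ring_subset)
  also have "set ?l = {p \<in> pairs N. \<omega> p \<le> t}"
    by (simp only: set_sort set_filter set_pairs_list)
  finally show ?thesis by simp
qed

lemma cluster_iso:
  assumes "\<forall>p\<in>E. fst p \<noteq> i \<and> snd p \<noteq> i"
  shows "cluster E i = {i}"
proof -
  have "j = i" if "(i, j) \<in> (E \<union> E\<inverse>)\<^sup>*" for j
    using that
    by (cases rule: converse_rtranclE) (use assms in force)+
  then show ?thesis by (auto simp: cluster_def)
qed

definition isol :: "nat \<Rightarrow> real \<Rightarrow> nat \<Rightarrow> ((nat \<times> nat) \<Rightarrow> real) \<Rightarrow> bool" where
  "isol N t i \<omega> = (\<forall>p\<in>pairs N. (fst p = i \<or> snd p = i) \<longrightarrow> t < \<omega> p)"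

lemma sol_lower:
  assumes "1 < a"
  shows "real (card {i\<in>{0..<N}. isol N t i \<omega>}) / real N \<le> sol_frac N a t \<omega>"
proof -
  have "{i\<in>{0..<N}. isol N t i \<omega>} \<subseteq> {i \<in> {0..<N}. real (card (cluster (links N a t \<omega>) i)) < a}"
  proof safe
    fix i assume "i \<in> {0..<N}" "isol N t i \<omega>"
    have "\<forall>p\<in>links N a t \<omega>. fst p \<noteq> i \<and> snd p \<noteq> i"
      using links_subset[of N a t \<omega>] \<open>isol N t i \<omega>\<close> by (force simp: isol_def)
    then show "real (card (cluster (links N a t \<omega>) i)) < a"
      using cluster_iso assms by simp
  qed
  then have "card {i\<in>{0..<N}. isol N t i \<omega>} \<le> card {i \<in> {0..<N}. real (card (cluster (links N a t \<omega>) i)) < a}"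
    by (intro card_mono) auto
  then show ?thesis unfolding sol_frac_def by (simp add: divide_right_mono)
qed



lemma (in prob_space) second_moment_bound:
  fixes A :: "nat \<Rightarrow> 'a set" and q c :: real
  assumes A: "\<And>i. i < N \<Longrightarrow> A i \<in> events"
    and q: "\<And>i. i < N \<Longrightarrow> q \<le> prob (A i)" "0 < q"
    and cov: "\<And>i j. i < N \<Longrightarrow> j < N \<Longrightarrow> i \<noteq> j \<Longrightarrow> prob (A i \<inter> A j) * c \<le> prob (A i) * prob (A j)"
    and c: "0 < c" "c \<le> 1" and N: "0 < N"
  shows "prob {x\<in>space M. (\<Sum>i<N. indicator (A i) x) \<le> q / 2 * real N}
     \<le> (real N + (real N)\<^sup>2 * (1 / c - 1)) / (q * real N / 2)\<^sup>2"
proof -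
  define X where "X x = (\<Sum>i<N. indicator (A i) x :: real)" for x
  define m where "m = (\<Sum>i<N. prob (A i))"
  have AA: "A i \<inter> A j \<in> events" if "i < N" "j < N" for i j using A that by auto
  have X2: "(X x)\<^sup>2 = (\<Sum>i<N. \<Sum>j<N. indicator (A i \<inter> A j) x)" for x
    unfolding X_def power2_eq_square sum_product indicator_inter_arith ..
  have intX: "integrable M X" unfolding X_def by (intro Bochner_Integration.integrable_sum) (use A in \<open>auto simp: integrable_indicator_iff emeasure_eq_measure Int_absorb2 sets.sets_into_space\<close>)
  have intX2': "integrable M (\<lambda>x. \<Sum>i<N. \<Sum>j<N. indicator (A i \<inter> A j) x :: real)"
    by (intro Bochner_Integration.integrable_sum) (use AA in \<open>auto simp: integrable_indicator_iff emeasure_eq_measure Int_absorb2 sets.sets_into_space\<close>)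
  have intX2: "integrable M (\<lambda>x. (X x)\<^sup>2)" unfolding X2 by (rule intX2')
  have mX[measurable]: "X \<in> borel_measurable M" using intX by auto
  have EX: "expectation X = m"
    unfolding X_def m_def
    by (subst Bochner_Integration.integral_sum) (use A in \<open>auto simp: integrable_indicator_iff emeasure_eq_measure Int_absorb2 sets.sets_into_space\<close>)
  have EX2: "expectation (\<lambda>x. (X x)\<^sup>2) = (\<Sum>i<N. \<Sum>j<N. prob (A i \<inter> A j))"
    unfolding X2
    apply (subst Bochner_Integration.integral_sum)
     apply (use AA in \<open>auto simp: integrable_indicator_iff emeasure_eq_measure Int_absorb2 sets.sets_into_space\<close>)[1]
    apply (intro sum.cong refl)
    apply (subst Bochner_Integration.integral_sum)
     apply (use AA in \<open>auto simp: integrable_indicator_iff emeasure_eq_measure Int_absorb2 sets.sets_into_space\<close>)[1]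
    apply (intro sum.cong refl)
    using AA by (auto simp: Int_absorb2 sets.sets_into_space)
  have Qle: "prob (A i \<inter> A j) \<le> (if i = j then prob (A i) else 0) + prob (A i) * prob (A j) / c"
    if "i < N" "j < N" for i j
  proof (cases "i = j")
    case True then show ?thesis using c by (simp add: measure_nonneg)
  next
    case False then show ?thesis using cov[OF that False] c by (simp add: field_simps)
  qed
  have "expectation (\<lambda>x. (X x)\<^sup>2) \<le> (\<Sum>i<N. \<Sum>j<N. (if i = j then prob (A i) else 0) + prob (A i) * prob (A j) / c)"
    unfolding EX2 by (intro sum_mono) (use Qle in auto)
  also have "\<dots> = m + m\<^sup>2 / c"
    by (simp add: sum.distrib m_def power2_eq_square sum_product sum_divide_distrib)
  finally have E2: "expectation (\<lambda>x. (X x)\<^sup>2) \<le> m + m\<^sup>2 / c" .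
  have m0: "0 \<le> m" unfolding m_def by (simp add: sum_nonneg)
  have mN: "m \<le> real N" unfolding m_def
    using sum_mono[of "{..<N}" "\<lambda>i. prob (A i)" "\<lambda>_. 1"] by simp
  have mq: "q * real N \<le> m" unfolding m_def
    using sum_mono[of "{..<N}" "\<lambda>_. q" "\<lambda>i. prob (A i)"] q by (simp add: mult.commute)
  have var: "variance X \<le> real N + (real N)\<^sup>2 * (1 / c - 1)"
  proof -
    have "variance X = expectation (\<lambda>x. (X x)\<^sup>2) - m\<^sup>2"
      using variance_eq[OF intX intX2] EX by simp
    also have "\<dots> \<le> m + m\<^sup>2 * (1 / c - 1)" using E2 by (simp add: field_simps)
    also have "\<dots> \<le> real N + (real N)\<^sup>2 * (1 / c - 1)"
    proof (intro add_mono mult_right_mono)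
      show "m\<^sup>2 \<le> (real N)\<^sup>2" using m0 mN by (intro power_mono) auto
      show "0 \<le> 1 / c - 1" using c by (simp add: field_simps)
    qed (use mN in auto)
    finally show ?thesis .
  qed
  have d0: "0 < q * real N / 2" using q N by simp
  have "prob {x\<in>space M. X x \<le> q / 2 * real N} \<le> prob {x\<in>space M. \<bar>X x - expectation X\<bar> \<ge> q * real N / 2}"
    using mq EX by (intro finite_measure_mono) (auto simp: abs_if)
  also have "\<dots> \<le> variance X / (q * real N / 2)\<^sup>2"
    by (rule Chebyshev_inequality[OF mX intX2 d0])
  also have "\<dots> \<le> (real N + (real N)\<^sup>2 * (1 / c - 1)) / (q * real N / 2)\<^sup>2"
    using var d0 by (intro divide_right_mono) auto
  finally show ?thesis unfolding X_def .
qed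



lemma finite_pairs: "finite (pairs N)"
  by (rule finite_subset[of _ "{..<N} \<times> {..<N}"]) (auto simp: pairs_def)

lemma exp_tail:
  assumes "0 < l" "0 \<le> t"
  shows "measure (density lborel (exponential_density l)) {t<..} = exp (- t * l)"
proof -
  interpret D: prob_space "density lborel (exponential_density l)"
    using prob_space_exponential_density[OF assms(1)] .
  have "emeasure (density lborel (exponential_density l)) {..t} = ennreal (1 - exp (- l * t))"
    using emeasure_erlang_density[OF assms(1), of 0 t] assms by (simp add: erlang_CDF_0)
  then have "D.prob {..t} = 1 - exp (- l * t)"
    using assms by (simp add: D.emeasure_eq_measure)
  moreover have "{t<..} = space (density lborel (exponential_density l)) - {..t}" by auto
  ultimately show ?thesis using D.prob_compl[of "{..t}"] by (simp add: mult.commute)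
qed

lemma box_prob:
  assumes N: "0 < N" and t: "0 \<le> t"
  shows "measure (clocks N) (Pi\<^sub>E (pairs N) (\<lambda>p. if p \<in> S then {t<..} else UNIV))
     = exp (- t / real N) ^ card (pairs N \<inter> S)"
proof -
  define D where "D = density lborel (exponential_density (1 / real N))"
  have pD: "prob_space D" unfolding D_def using N by (intro prob_space_exponential_density) simp
  have pps: "product_prob_space (\<lambda>_. D)" using product_prob_spaceI[of "\<lambda>_. D"] pD by simp
  interpret finite_product_prob_space "\<lambda>_. D" "pairs N"
    using pps finite_pairs[of N]
    by (auto simp: finite_product_prob_space_def finite_product_sigma_finite_def finite_product_sigma_finite_axioms_def product_prob_space_def)
  interpret D: prob_space D by (rule pD)
  have "measure (clocks N) (Pi\<^sub>E (pairs N) (\<lambda>p. if p \<in> S then {t<..} else UNIV))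
     = (\<Prod>p\<in>pairs N. measure D (if p \<in> S then {t<..} else UNIV))"
    unfolding clocks_def D_def[symmetric] by (rule prob_times) (auto simp: D_def)
  also have "\<dots> = (\<Prod>p\<in>pairs N. if p \<in> S then exp (- t / real N) else 1)"
  proof (rule prod.cong)
    fix p
    have "measure D UNIV = 1" using prob_space.prob_space[OF pD] by (simp add: D_def)
    then show "measure D (if p \<in> S then {t<..} else UNIV) = (if p \<in> S then exp (- t / real N) else 1)"
      using exp_tail[of "1 / real N" t] N t by (auto simp: D_def)
  qed simp
  also have "\<dots> = exp (- t / real N) ^ card (pairs N \<inter> S)"
    using finite_pairs[of N] by (simp add: prod.If_cases Int_def)
  finally show ?thesis .
qed

lemma space_clocks: "space (clocks N) = Pi\<^sub>E (pairs N) (\<lambda>_. UNIV)"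
  by (simp add: clocks_def space_PiM)

definition Sx :: "nat \<Rightarrow> (nat \<times> nat) set" where "Sx i = {p. fst p = i \<or> snd p = i}"

lemma iso_box: "{\<omega> \<in> space (clocks N). isol N t i \<omega>} = Pi\<^sub>E (pairs N) (\<lambda>p. if p \<in> Sx i then {t<..} else UNIV)"
  by (auto simp: space_clocks isol_def Sx_def PiE_def Pi_def)

lemma iso2_box: "{\<omega> \<in> space (clocks N). isol N t i \<omega>} \<inter> {\<omega> \<in> space (clocks N). isol N t j \<omega>}
   = Pi\<^sub>E (pairs N) (\<lambda>p. if p \<in> Sx i \<union> Sx j then {t<..} else UNIV)"
  by (auto simp: space_clocks isol_def Sx_def PiE_def Pi_def)

lemma card_Sx: "card (pairs N \<inter> Sx i) \<le> 2 * N"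
proof -
  have "pairs N \<inter> Sx i \<subseteq> (\<lambda>j. (i, j)) ` {..<N} \<union> (\<lambda>j. (j, i)) ` {..<N}"
    by (auto simp: pairs_def Sx_def)
  then have "card (pairs N \<inter> Sx i) \<le> card ((\<lambda>j. (i, j)) ` {..<N} \<union> (\<lambda>j. (j, i)) ` {..<N})"
    by (intro card_mono) auto
  also have "\<dots> \<le> card ((\<lambda>j. (i, j)) ` {..<N}) + card ((\<lambda>j. (j, i)) ` {..<N})" by (rule card_Un_le)
  also have "\<dots> \<le> N + N" by (intro add_mono) (auto intro: card_image_le[THEN order_trans])
  finally show ?thesis by simp
qed

lemma card_Sx2:
  assumes "i \<noteq> j"
  shows "card (pairs N \<inter> Sx i) + card (pairs N \<inter> Sx j) \<le> card (pairs N \<inter> (Sx i \<union> Sx j)) + 1"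
proof -
  have "(pairs N \<inter> Sx i) \<inter> (pairs N \<inter> Sx j) \<subseteq> {(min i j, max i j)}"
    using assms by (auto simp: pairs_def Sx_def)
  then have c1: "card ((pairs N \<inter> Sx i) \<inter> (pairs N \<inter> Sx j)) \<le> 1"
    using card_mono[of "{(min i j, max i j)}"] by fastforce
  have "card (pairs N \<inter> Sx i) + card (pairs N \<inter> Sx j)
      = card ((pairs N \<inter> Sx i) \<union> (pairs N \<inter> Sx j)) + card ((pairs N \<inter> Sx i) \<inter> (pairs N \<inter> Sx j))"
    using finite_pairs[of N] by (intro card_Un_Int) auto
  also have "(pairs N \<inter> Sx i) \<union> (pairs N \<inter> Sx j) = pairs N \<inter> (Sx i \<union> Sx j)" by auto
  finally show ?thesis using c1 by simp
qed



lemma comp_meas: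
  assumes "p \<in> pairs N"
  shows "(\<lambda>\<omega>. \<omega> p) \<in> borel_measurable (clocks N)"
  unfolding clocks_def using assms by measurable

lemma insort_meas:
  assumes "x \<in> pairs N" "set ys \<subseteq> pairs N"
  shows "(\<lambda>\<omega>. insort_key \<omega> x ys) \<in> measurable (clocks N) (count_space {l. set l \<subseteq> pairs N})"
  using assms(2)
proof (induction ys)
  case Nil then show ?case using assms(1) by simp
next
  case (Cons y ys)
  have m1: "(\<lambda>\<omega>. \<omega> x) \<in> borel_measurable (clocks N)" "(\<lambda>\<omega>. \<omega> y) \<in> borel_measurable (clocks N)"
    using comp_meas assms Cons.prems by auto
  have "(\<lambda>\<omega>. if \<omega> x \<le> \<omega> y then x # y # ys else y # insort_key \<omega> x ys)
      \<in> measurable (clocks N) (count_space {l. set l \<subseteq> pairs N})"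
  proof (rule measurable_If)
    show "(\<lambda>\<omega>. x # y # ys) \<in> measurable (clocks N) (count_space {l. set l \<subseteq> pairs N})"
      using assms Cons.prems by simp
    have "(\<lambda>l. y # l) \<in> measurable (count_space {l. set l \<subseteq> pairs N}) (count_space {l. set l \<subseteq> pairs N})"
      using Cons.prems by auto
    then show "(\<lambda>\<omega>. y # insort_key \<omega> x ys) \<in> measurable (clocks N) (count_space {l. set l \<subseteq> pairs N})"
      using Cons by (intro measurable_compose[OF _ \<open>(\<lambda>l. y # l) \<in> _\<close>]) auto
    show "{\<omega> \<in> space (clocks N). \<omega> x \<le> \<omega> y} \<in> sets (clocks N)"
      using m1 by measurable
  qed
  then show ?case by simp
qed

lemma sort_meas:
  assumes "set ys \<subseteq> pairs N"
  shows "(\<lambda>\<omega>. sort_key \<omega> ys) \<in> measurable (clocks N) (count_space {l. set l \<subseteq> pairs N})"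
  using assms
proof (induction ys)
  case Nil then show ?case by simp
next
  case (Cons y ys)
  have "(\<lambda>\<omega>. insort_key \<omega> y (sort_key \<omega> ys)) \<in> measurable (clocks N) (count_space {l. set l \<subseteq> pairs N})"
  proof (rule measurable_compose_countable'[where f="\<lambda>l \<omega>. insort_key \<omega> y l" and g="\<lambda>\<omega>. sort_key \<omega> ys"])
    show "(\<lambda>\<omega>. insort_key \<omega> y l) \<in> measurable (clocks N) (count_space {l. set l \<subseteq> pairs N})"
      if "l \<in> {l. set l \<subseteq> pairs N}" for l
      using that Cons.prems by (intro insort_meas) auto
    show "(\<lambda>\<omega>. sort_key \<omega> ys) \<in> measurable (clocks N) (count_space {l. set l \<subseteq> pairs N})"
      using Cons by auto
    show "countable {l. set l \<subseteq> pairs N}"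
      by (rule countable_subset[of _ UNIV]) auto
  qed
  then show ?case by simp
qed

lemma filter_meas:
  assumes "set ys \<subseteq> pairs N"
  shows "(\<lambda>\<omega>. filter (\<lambda>p. \<omega> p \<le> t) ys) \<in> measurable (clocks N) (count_space {l. set l \<subseteq> pairs N})"
  using assms
proof (induction ys)
  case Nil then show ?case by simp
next
  case (Cons y ys)
  have m1: "(\<lambda>\<omega>. \<omega> y) \<in> borel_measurable (clocks N)"
    using comp_meas Cons.prems by auto
  have "(\<lambda>\<omega>. if \<omega> y \<le> t then y # filter (\<lambda>p. \<omega> p \<le> t) ys else filter (\<lambda>p. \<omega> p \<le> t) ys)
      \<in> measurable (clocks N) (count_space {l. set l \<subseteq> pairs N})"
  proof (rule measurable_If)
    have "(\<lambda>l. y # l) \<in> measurable (count_space {l. set l \<subseteq> pairs N}) (count_space {l. set l \<subseteq> pairs N})"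
      using Cons.prems by auto
    then show "(\<lambda>\<omega>. y # filter (\<lambda>p. \<omega> p \<le> t) ys) \<in> measurable (clocks N) (count_space {l. set l \<subseteq> pairs N})"
      using Cons by (intro measurable_compose[OF _ \<open>(\<lambda>l. y # l) \<in> _\<close>]) auto
    show "(\<lambda>\<omega>. filter (\<lambda>p. \<omega> p \<le> t) ys) \<in> measurable (clocks N) (count_space {l. set l \<subseteq> pairs N})"
      using Cons by auto
    show "{\<omega> \<in> space (clocks N). \<omega> y \<le> t} \<in> sets (clocks N)"
      using m1 by measurable
  qed
  then show ?case by simp
qed

lemma sol_frac_meas: "sol_frac N a t \<in> borel_measurable (clocks N)"
proof -
  define xs where "xs = [(i, j). j \<leftarrow> [0..<N], i \<leftarrow> [0..<j]]"
  have xs: "set xs \<subseteq> pairs N" unfolding xs_def set_pairs_list by simp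
  define G where "G l = real (card {i \<in> {0..<N}. real (card (cluster (fold (\<lambda>p E. ring a E p) l {}) i)) < a}) / real N" for l
  have L: "(\<lambda>\<omega>. sort_key \<omega> (filter (\<lambda>p. \<omega> p \<le> t) xs)) \<in> measurable (clocks N) (count_space {l. set l \<subseteq> pairs N})"
  proof (rule measurable_compose_countable'[where f="\<lambda>l \<omega>. sort_key \<omega> l" and g="\<lambda>\<omega>. filter (\<lambda>p. \<omega> p \<le> t) xs"])
    show "(\<lambda>\<omega>. sort_key \<omega> l) \<in> measurable (clocks N) (count_space {l. set l \<subseteq> pairs N})"
      if "l \<in> {l. set l \<subseteq> pairs N}" for l
      using that by (intro sort_meas) auto
    show "(\<lambda>\<omega>. filter (\<lambda>p. \<omega> p \<le> t) xs) \<in> measurable (clocks N) (count_space {l. set l \<subseteq> pairs N})"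
      using filter_meas[OF xs] by auto
    show "countable {l. set l \<subseteq> pairs N}"
      by (rule countable_subset[of _ UNIV]) auto
  qed
  have "(\<lambda>\<omega>. G (sort_key \<omega> (filter (\<lambda>p. \<omega> p \<le> t) xs))) \<in> borel_measurable (clocks N)"
    by (rule measurable_compose[OF L]) simp
  moreover have "sol_frac N a t = (\<lambda>\<omega>. G (sort_key \<omega> (filter (\<lambda>p. \<omega> p \<le> t) xs)))"
    by (auto simp: sol_frac_def links_def G_def xs_def)
  ultimately show ?thesis by simp
qed



lemma main_bound:
  assumes N: "0 < N" and t: "0 \<le> t" and a: "1 < a"
  shows "measure (clocks N) {\<omega> \<in> space (clocks N). sol_frac N a t \<omega> \<le> exp (- 2 * t) / 2}
    \<le> 4 / (exp (- 2 * t))\<^sup>2 * (1 / real N + (exp (t / real N) - 1))"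
proof -
  define c where "c = exp (- t / real N)"
  define q where "q = exp (- 2 * t)"
  define A where "A i = {\<omega> \<in> space (clocks N). isol N t i \<omega>}" for i
  define D where "D = density lborel (exponential_density (1 / real N))"
  have pD: "prob_space D" unfolding D_def using N by (intro prob_space_exponential_density) simp
  interpret P: prob_space "clocks N" unfolding clocks_def D_def[symmetric]
    by (rule prob_space_PiM) (rule pD)
  have c0: "0 < c" "c \<le> 1" using t N by (auto simp: c_def)
  have q0: "0 < q" by (simp add: q_def)
  have PA: "P.prob (A i) = c ^ card (pairs N \<inter> Sx i)" for i
    unfolding A_def iso_box c_def using box_prob[OF N t] by simp
  have A_ev: "A i \<in> P.events" for i
    unfolding A_def iso_box unfolding clocks_def
    by (rule sets_PiM_I_finite) (auto simp: finite_pairs)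
  have cq: "c ^ (2 * N) = q"
    unfolding c_def q_def using N by (simp add: exp_of_nat_mult[symmetric])
  have Aq: "q \<le> P.prob (A i)" for i
    unfolding PA cq[symmetric] using c0 card_Sx[of N i] by (intro power_decreasing) auto
  have cov: "P.prob (A i \<inter> A j) * c \<le> P.prob (A i) * P.prob (A j)" if "i \<noteq> j" for i j
  proof -
    have "P.prob (A i \<inter> A j) * c = c ^ (card (pairs N \<inter> (Sx i \<union> Sx j)) + 1)"
      unfolding A_def iso2_box c_def using box_prob[OF N t, of "Sx i \<union> Sx j"] by (simp del: Un_iff)
    also have "\<dots> \<le> c ^ (card (pairs N \<inter> Sx i) + card (pairs N \<inter> Sx j))"
      using c0 card_Sx2[OF that, of N] by (intro power_decreasing) auto
    also have "\<dots> = P.prob (A i) * P.prob (A j)" by (simp add: PA power_add)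
    finally show ?thesis .
  qed
  have "{\<omega> \<in> space (clocks N). sol_frac N a t \<omega> \<le> q / 2}
      \<subseteq> {\<omega> \<in> space (clocks N). (\<Sum>i<N. indicator (A i) \<omega>) \<le> q / 2 * real N}"
  proof safe
    fix \<omega> assume \<omega>: "\<omega> \<in> space (clocks N)" and le: "sol_frac N a t \<omega> \<le> q / 2"
    have "(\<Sum>i<N. indicator (A i) \<omega> :: real) = real (card {i\<in>{0..<N}. isol N t i \<omega>})"
      using \<omega> by (simp add: A_def indicator_def sum.If_cases lessThan_atLeast0 Int_def)
    moreover have "real (card {i\<in>{0..<N}. isol N t i \<omega>}) / real N \<le> q / 2"
      using sol_lower[OF a, of N t \<omega>] le by linarith
    ultimately show "(\<Sum>i<N. indicator (A i) \<omega>) \<le> q / 2 * real N"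
      using N by (simp add: field_simps)
  qed
  then have "P.prob {\<omega> \<in> space (clocks N). sol_frac N a t \<omega> \<le> q / 2}
      \<le> P.prob {\<omega> \<in> space (clocks N). (\<Sum>i<N. indicator (A i) \<omega>) \<le> q / 2 * real N}"
  proof (rule P.finite_measure_mono)
    have [measurable]: "A i \<in> sets (clocks N)" for i using A_ev by simp
    show "{\<omega> \<in> space (clocks N). (\<Sum>i<N. indicator (A i) \<omega>) \<le> q / 2 * real N} \<in> P.events"
      by measurable
  qed
  also have "\<dots> \<le> (real N + (real N)\<^sup>2 * (1 / c - 1)) / (q * real N / 2)\<^sup>2"
    by (rule P.second_moment_bound[OF A_ev Aq q0 cov c0 N])
  also have "\<dots> = 4 / q\<^sup>2 * (1 / real N + (exp (t / real N) - 1))"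
    using N q0 by (simp add: c_def exp_minus field_simps power2_eq_square)
  finally show ?thesis unfolding q_def .
qed



theorem lemma2p6:
  fixes \<alpha> :: "nat \<Rightarrow> real"
  assumes "filterlim \<alpha> at_top sequentially"
    and "(\<lambda>N. \<alpha> N / real N) \<longlonglongrightarrow> 0"
    and "(t::real) \<ge> 0"
  shows "\<exists>\<nu>>0. (\<forall>N\<ge>2. {\<omega> \<in> space (clocks N). sol_frac N (\<alpha> N) t \<omega> \<le> \<nu>} \<in> sets (clocks N))
     \<and> (\<lambda>N. measure (clocks N) {\<omega> \<in> space (clocks N). sol_frac N (\<alpha> N) t \<omega> \<le> \<nu>}) \<longlonglongrightarrow> 0"
proof (intro exI conjI allI impI)
  show "0 < exp (- 2 * t) / 2" by simp
  show "{\<omega> \<in> space (clocks N). sol_frac N (\<alpha> N) t \<omega> \<le> exp (- 2 * t) / 2} \<in> sets (clocks N)" for N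
  proof -
    have [measurable]: "sol_frac N (\<alpha> N) t \<in> borel_measurable (clocks N)" by (rule sol_frac_meas)
    show ?thesis by measurable
  qed
  define B where "B N = 4 / (exp (- 2 * t))\<^sup>2 * (1 / real N + (exp (t / real N) - 1))" for N :: nat
  have lim1: "(\<lambda>N. 1 / real N) \<longlonglongrightarrow> 0"
    by (intro tendsto_divide_0[OF tendsto_const] filterlim_at_top_imp_at_infinity filterlim_real_sequentially)
  have lim2: "(\<lambda>N. t / real N) \<longlonglongrightarrow> 0"
    by (intro tendsto_divide_0[OF tendsto_const] filterlim_at_top_imp_at_infinity filterlim_real_sequentially)
  have "(\<lambda>N. exp (t / real N)) \<longlonglongrightarrow> exp 0"
    by (intro tendsto_exp lim2)
  then have "B \<longlonglongrightarrow> 4 / (exp (- 2 * t))\<^sup>2 * (0 + (exp 0 - 1))"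
    unfolding B_def by (intro tendsto_intros lim1)
  then have limB: "B \<longlonglongrightarrow> 0" by simp
  have ev: "eventually (\<lambda>N. 1 < \<alpha> N \<and> 0 < N) sequentially"
    using assms(1)[unfolded filterlim_at_top_dense] eventually_gt_at_top[of 0]
    by (auto intro: eventually_conj)
  show "(\<lambda>N. measure (clocks N) {\<omega> \<in> space (clocks N). sol_frac N (\<alpha> N) t \<omega> \<le> exp (- 2 * t) / 2}) \<longlonglongrightarrow> 0"
  proof (rule tendsto_sandwich[OF _ _ tendsto_const limB])
    show "\<forall>\<^sub>F N in sequentially. 0 \<le> measure (clocks N) {\<omega> \<in> space (clocks N). sol_frac N (\<alpha> N) t \<omega> \<le> exp (- 2 * t) / 2}"
      by simp
    show "\<forall>\<^sub>F N in sequentially. measure (clocks N) {\<omega> \<in> space (clocks N). sol_frac N (\<alpha> N) t \<omega> \<le> exp (- 2 * t) / 2} \<le> B N"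
      using ev by eventually_elim (unfold B_def, rule main_bound, use assms(3) in auto)
  qed
qed


end
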